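(* Let $(\mathcal{A},\succ,\prec)$ be a finite-dimensional antidendriform algebra with associated antiassociative algebra $(\mathcal{A},\ast)$. Then $(\mathcal{A}\ltimes_{R^*_\prec,L^*_\succ}\mathcal{A}^*,\omega)$, where $\mathcal{A}^*$ carries the zero product, is a double construction of symplectic antiassociative algebra. Conversely, let $(T(\mathcal{A})=\mathcal{A}\oplus\mathcal{A}^*,\ast,\omega)$ be a double construction of symplectic antiassociative algebra such that $\mathcal{A}^*$ is an ideal of $T(\mathcal{A})$. Then the product of $\mathcal{A}^*$ is zero, and $(T(\mathcal{A}),\omega)$ is isomorphic (as double constructions of symplectic antiassociative algebras) to $(\mathcal{A}\ltimes_{R^*_\prec,L^*_\succ}\mathcal{A}^*,\omega)$, where $(\succ,\prec)$ is the antidendriform structure on $\mathcal{A}$ obtained by restricting the one defined on $T(\mathcal{A})$ by $\omega(u\succ v,w)=\omega(v,w\ast u)$, $\omega(u\prec v,w)=\omega(u,v\ast w)$.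
   Context: An antiassociative algebra is a vector space with bilinear product satisfying $(x\ast y)\ast z=-x\ast(y\ast z)$. An antidendriform algebra is a vector space with bilinear products $\prec,\succ$ such that, with $x\ast y=x\prec y+x\succ y$: $(x\prec y)\prec z=-x\prec(y\ast z)$, $(x\succ y)\prec z=-x\succ(y\prec z)$, $x\succ(y\succ z)=-(x\ast y)\succ z$. $R^*_\prec,L^*_\succ:\mathcal{A}\to gl(\mathcal{A}^* )$ are given by $\langle R^*_\prec(x)a^*,y\rangle=\langle y\prec x,a^*\rangle$, $\langle L^*_\succ(x)a^*,y\rangle=\langle x\succ y,a^*\rangle$. $\mathcal{A}\ltimes_{R^*_\prec,L^*_\succ}\mathcal{A}^*$ is $\mathcal{A}\oplus\mathcal{A}^*$ with product $(x+a^* )\ast(y+b^* )=x\ast y+R^*_\prec(x)b^*+L^*_\succ(y)a^*$. A double construction of symplectic antiassociative algebra associated to antiassociative algebras $\mathcal{A}$ and $\mathcal{A}^*$ is an antiassociative product on $\mathcal{A}\oplus\mathcal{A}^*$ with $\mathcal{A},\mathcal{A}^*$ subalgebras and $\omega(x+a^*,y+b^* )=-\langle x,b^*\rangle+\langle a^*,y\rangle$ satisfying $\omega(u\ast v,w)+\omega(v\ast w,u)+\omega(w\ast u,v)=0$. Two such are isomorphic if there is an antiassociative algebra isomorphism $\varphi$ between them mapping $\mathcal{A}_1$ onto $\mathcal{A}_2$, $\mathcal{A}_1^*$ onto $\mathcal{A}_2^*$, with $\omega_1(u,v)=\omega_2(\varphi(u),\varphi(v))$. *)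

theory Defs
  imports "HOL-Analysis.Finite_Cartesian_Product" "HOL-Library.Product_Plus"
begin

text \<open>A finite-dimensional vector space A over a field 'k is modelled in coordinates
as 'k^'n ('n finite); its dual A* is also 'k^'n with the pairing below.
T(A) = A (+) A* is the product type, A = A x {0}, A* = {0} x A*.\<close>

definition pairing :: "'k::field^'n::finite \<Rightarrow> 'k^'n \<Rightarrow> 'k" where
  "pairing x a = (\<Sum>i\<in>UNIV. x $ i * a $ i)"

definition bilin :: "('k::field^'n \<Rightarrow> 'k^'n \<Rightarrow> 'k^'n) \<Rightarrow> bool" where
  "bilin m \<longleftrightarrow>
     (\<forall>x y z. m (x + y) z = m x z + m y z) \<and>
     (\<forall>x y z. m x (y + z) = m x y + m x z) \<and>
     (\<forall>c x y. m (c *s x) y = c *s m x y) \<and>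
     (\<forall>c x y. m x (c *s y) = c *s m x y)"

definition tsc :: "'k::field \<Rightarrow> ('k^'n) \<times> ('k^'n) \<Rightarrow> ('k^'n) \<times> ('k^'n)" where
  "tsc c u = (c *s fst u, c *s snd u)"

definition bilinT :: "(('k::field^'n) \<times> ('k^'n) \<Rightarrow> ('k^'n) \<times> ('k^'n) \<Rightarrow> ('k^'n) \<times> ('k^'n)) \<Rightarrow> bool" where
  "bilinT m \<longleftrightarrow>
     (\<forall>x y z. m (x + y) z = m x z + m y z) \<and>
     (\<forall>x y z. m x (y + z) = m x y + m x z) \<and>
     (\<forall>c x y. m (tsc c x) y = tsc c (m x y)) \<and>
     (\<forall>c x y. m x (tsc c y) = tsc c (m x y))"

definition linearT :: "(('k::field^'n) \<times> ('k^'n) \<Rightarrow> ('k^'n) \<times> ('k^'n)) \<Rightarrow> bool" where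
  "linearT f \<longleftrightarrow> (\<forall>u v. f (u + v) = f u + f v) \<and> (\<forall>c u. f (tsc c u) = tsc c (f u))"

definition antiassoc :: "('a \<Rightarrow> 'a \<Rightarrow> 'a::uminus) \<Rightarrow> bool" where
  "antiassoc m \<longleftrightarrow> (\<forall>x y z. m (m x y) z = - m x (m y z))"

definition antidendriform :: "('k::field^'n \<Rightarrow> 'k^'n \<Rightarrow> 'k^'n) \<Rightarrow> ('k^'n \<Rightarrow> 'k^'n \<Rightarrow> 'k^'n) \<Rightarrow> bool" where
  "antidendriform succ prec \<longleftrightarrow> bilin succ \<and> bilin prec \<and>
     (\<forall>x y z. prec (prec x y) z = - prec x (prec y z + succ y z)) \<and>
     (\<forall>x y z. prec (succ x y) z = - succ x (prec y z)) \<and>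
     (\<forall>x y z. succ x (succ y z) = - succ (prec x y + succ x y) z)"

definition Rstar :: "('k::field^'n::finite \<Rightarrow> 'k^'n \<Rightarrow> 'k^'n) \<Rightarrow> 'k^'n \<Rightarrow> 'k^'n \<Rightarrow> 'k^'n" where
  "Rstar prec x b = (THE c. \<forall>y. pairing y c = pairing (prec y x) b)"

definition Lstar :: "('k::field^'n::finite \<Rightarrow> 'k^'n \<Rightarrow> 'k^'n) \<Rightarrow> 'k^'n \<Rightarrow> 'k^'n \<Rightarrow> 'k^'n" where
  "Lstar succ x a = (THE c. \<forall>y. pairing y c = pairing (succ x y) a)"

definition semidirect :: "('k::field^'n::finite \<Rightarrow> 'k^'n \<Rightarrow> 'k^'n) \<Rightarrow> ('k^'n \<Rightarrow> 'k^'n \<Rightarrow> 'k^'n)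
    \<Rightarrow> ('k^'n) \<times> ('k^'n) \<Rightarrow> ('k^'n) \<times> ('k^'n) \<Rightarrow> ('k^'n) \<times> ('k^'n)" where
  "semidirect succ prec u v =
     (prec (fst u) (fst v) + succ (fst u) (fst v),
      Rstar prec (fst u) (snd v) + Lstar succ (fst v) (snd u))"

definition omega :: "('k::field^'n::finite) \<times> ('k^'n) \<Rightarrow> ('k^'n) \<times> ('k^'n) \<Rightarrow> 'k" where
  "omega u v = - pairing (fst u) (snd v) + pairing (snd u) (fst v)"

definition double_construction ::
  "(('k::field^'n::finite) \<times> ('k^'n) \<Rightarrow> ('k^'n) \<times> ('k^'n) \<Rightarrow> ('k^'n) \<times> ('k^'n))
   \<Rightarrow> ('k^'n \<Rightarrow> 'k^'n \<Rightarrow> 'k^'n) \<Rightarrow> ('k^'n \<Rightarrow> 'k^'n \<Rightarrow> 'k^'n) \<Rightarrow> bool" where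
  "double_construction P mA mD \<longleftrightarrow>
     bilinT P \<and> antiassoc P \<and> antiassoc mA \<and> antiassoc mD \<and>
     (\<forall>x y. P (x, 0) (y, 0) = (mA x y, 0)) \<and>
     (\<forall>a b. P (0, a) (0, b) = (0, mD a b)) \<and>
     (\<forall>u v w. omega (P u v) w + omega (P v w) u + omega (P w u) v = 0)"

definition dc_isomorphic ::
  "(('k::field^'n::finite) \<times> ('k^'n) \<Rightarrow> ('k^'n) \<times> ('k^'n) \<Rightarrow> ('k^'n) \<times> ('k^'n))
   \<Rightarrow> (('k^'n) \<times> ('k^'n) \<Rightarrow> ('k^'n) \<times> ('k^'n) \<Rightarrow> ('k^'n) \<times> ('k^'n)) \<Rightarrow> bool" where
  "dc_isomorphic P Q \<longleftrightarrow> (\<exists>\<phi>. bij \<phi> \<and> linearT \<phi> \<and>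
     (\<forall>u v. \<phi> (P u v) = Q (\<phi> u) (\<phi> v)) \<and>
     \<phi> ` (UNIV \<times> {0}) = UNIV \<times> {0} \<and>
     \<phi> ` ({0} \<times> UNIV) = {0} \<times> UNIV \<and>
     (\<forall>u v. omega u v = omega (\<phi> u) (\<phi> v)))"

definition succT where
  "succT P u v = (THE z. \<forall>w. omega z w = omega v (P w u))"
definition precT where
  "precT P u v = (THE z. \<forall>w. omega z w = omega u (P v w))"

definition succA where "succA P x y = fst (succT P (x, 0) (y, 0))"
definition precA where "precA P x y = fst (precT P (x, 0) (y, 0))"

end

theory Submission
  imports Defs
begin

lemma pairing_add1: "pairing (x + y) a = pairing x a + pairing y a"
  by (simp add: pairing_def sum.distrib distrib_right)
lemma pairing_add2: "pairing x (a + b) = pairing x a + pairing x b"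
  by (simp add: pairing_def sum.distrib distrib_left)
lemma pairing_sc1: "pairing (c *s x) a = c * pairing x a"
  by (simp add: pairing_def sum_distrib_left mult.assoc)
lemma pairing_sc2: "pairing x (c *s a) = c * pairing x a"
  by (simp add: pairing_def sum_distrib_left mult.assoc mult.left_commute)
lemma pairing_neg1: "pairing (- x) a = - pairing x a"
  by (simp add: pairing_def sum_negf)
lemma pairing_neg2: "pairing x (- a) = - pairing x a"
  by (simp add: pairing_def sum_negf)
lemma pairing_zero1[simp]: "pairing 0 a = 0"
  by (simp add: pairing_def)
lemma pairing_zero2[simp]: "pairing x 0 = 0"
  by (simp add: pairing_def)
lemma pairing_commute: "pairing x a = pairing a x"
  by (simp add: pairing_def mult.commute)
lemma pairing_axis: "pairing (axis i 1) a = a $ i"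
proof -
  have "pairing (axis i 1) a = (\<Sum>j\<in>UNIV. if j = i then a $ i else 0)"
    unfolding pairing_def axis_def by (rule sum.cong) auto
  then show ?thesis by simp
qed
lemma pairing_eqI: "(\<And>y. pairing y a = pairing y b) \<Longrightarrow> a = b"
  by (metis pairing_axis vec_eq_iff)
lemma pairing_eqI2: "(\<And>y. pairing a y = pairing b y) \<Longrightarrow> a = b"
  by (metis pairing_commute pairing_eqI)

lemma vec_sum_comp: "(sum f S) $ i = sum (\<lambda>x. f x $ i) S"
  by (induction S rule: infinite_finite_induct) auto

lemma dual_ex:
  fixes g :: "'k::field^'n::finite \<Rightarrow> 'k"
  assumes add: "\<And>y z. g (y + z) = g y + g z" and sc: "\<And>c y. g (c *s y) = c * g y"
  shows "\<exists>a. \<forall>y. pairing y a = g y"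
proof -
  have g0: "g 0 = 0" using sc[of 0 0] by simp
  have gs: "g (sum f S) = (\<Sum>x\<in>S. g (f x))" for f :: "'n \<Rightarrow> 'k^'n" and S
    by (induction S rule: infinite_finite_induct) (auto simp: g0 add)
  have ex: "y = (\<Sum>i\<in>UNIV. y $ i *s axis i 1)" for y :: "'k^'n"
  proof -
    have "(\<Sum>i\<in>UNIV. y $ i *s axis i (1::'k)) $ j = y $ j" for j
    proof -
      have "(\<Sum>i\<in>UNIV. y $ i *s axis i (1::'k)) $ j = (\<Sum>i\<in>UNIV. if i = j then y $ j else 0)"
        unfolding vec_sum_comp by (rule sum.cong) (auto simp: axis_def)
      then show ?thesis by simp
    qed
    then show ?thesis by (simp add: vec_eq_iff)
  qed
  show ?thesis
  proof (intro exI allI)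
    fix y :: "'k^'n"
    have "g y = (\<Sum>i\<in>UNIV. y $ i * g (axis i 1))"
      by (subst ex) (simp add: gs sc)
    then show "pairing y (\<chi> i. g (axis i 1)) = g y"
      by (simp add: pairing_def)
  qed
qed

lemma the_dual:
  fixes g :: "'k::field^'n::finite \<Rightarrow> 'k"
  assumes add: "\<And>y z. g (y + z) = g y + g z" and sc: "\<And>c y. g (c *s y) = c * g y"
  shows "pairing y (THE a. \<forall>y. pairing y a = g y) = g y"
proof -
  have "\<exists>!a. \<forall>y. pairing y a = g y"
    using dual_ex[OF add sc] pairing_eqI by metis
  from theI'[OF this] show ?thesis by blast
qed

lemma omega_pair[simp]: "omega (x, a) (y, b) = - pairing x b + pairing a y"
  by (simp add: omega_def)

lemma omega_eqI: "(\<And>w. omega z w = omega z' w) \<Longrightarrow> z = z'"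
proof -
  assume h: "\<And>w. omega z w = omega z' w"
  obtain x a where z: "z = (x, a)" by fastforce
  obtain x' a' where z': "z' = (x', a')" by fastforce
  have "x = x'" using h[of "(0, _)"] unfolding z z'
    by (intro pairing_eqI2) simp
  moreover have "a = a'" using h[of "(_, 0)"] unfolding z z'
    by (intro pairing_eqI2) simp
  ultimately show ?thesis using z z' by simp
qed


lemma bilin_facts:
  assumes "bilin m"
  shows "m (x + y) z = m x z + m y z" "m x (y + z) = m x y + m x z"
    "m (c *s x) y = c *s m x y" "m x (c *s y) = c *s m x y"
    "m 0 y = 0" "m x 0 = 0"
proof -
  show a: "m (x + y) z = m x z + m y z" "m x (y + z) = m x y + m x z"
    "m (c *s x) y = c *s m x y" "m x (c *s y) = c *s m x y"
    using assms unfolding bilin_def by blast+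
  show "m 0 y = 0" using assms unfolding bilin_def by (metis vector_smult_lzero)
  show "m x 0 = 0" using assms unfolding bilin_def by (metis vector_smult_lzero)
qed

lemma Rstar_char:
  assumes "bilin prec"
  shows "pairing y (Rstar prec x b) = pairing (prec y x) b"
  unfolding Rstar_def
  by (rule the_dual) (simp_all add: bilin_facts[OF assms] pairing_add1 pairing_sc1)

lemma Lstar_char:
  assumes "bilin succ"
  shows "pairing y (Lstar succ x a) = pairing (succ x y) a"
  unfolding Lstar_def
  by (rule the_dual) (simp_all add: bilin_facts[OF assms] pairing_add1 pairing_sc1)

lemma part1:
  fixes succ prec :: "'k::field^'n::finite \<Rightarrow> 'k^'n \<Rightarrow> 'k^'n"
  assumes AD: "antidendriform succ prec"
  shows "double_construction (semidirect succ prec) (\<lambda>x y. prec x y + succ x y) (\<lambda>a b. 0)"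
proof -
  have bs: "bilin succ" and bp: "bilin prec" using AD unfolding antidendriform_def by auto
  have ax1: "prec (prec x y) z = - prec x (prec y z + succ y z)"
   and ax2: "prec (succ x y) z = - succ x (prec y z)"
   and ax3: "succ x (succ y z) = - succ (prec x y + succ x y) z" for x y z
    using AD unfolding antidendriform_def by auto
  note S = bilin_facts[OF bs] and Pr = bilin_facts[OF bp]
  define R where "R = Rstar prec"
  define L where "L = Lstar succ"
  have Rc: "pairing y (R x b) = pairing (prec y x) b" for y x b
    unfolding R_def by (rule Rstar_char[OF bp])
  have Lc: "pairing y (L x a) = pairing (succ x y) a" for y x a
    unfolding L_def by (rule Lstar_char[OF bs])
  have Rc': "pairing (R x b) y = pairing (prec y x) b" for y x b
    using Rc pairing_commute by metis
  have Lc': "pairing (L x a) y = pairing (succ x y) a" for y x a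
    using Lc pairing_commute by metis
  have sd: "semidirect succ prec (x, a) (y, b) = (prec x y + succ x y, R x b + L y a)" for x a y b
    by (simp add: semidirect_def R_def L_def)
  have R1: "R (x + x') b = R x b + R x' b" for x x' b
    by (rule pairing_eqI) (simp add: Rc Pr pairing_add1 pairing_add2)
  have R2: "R x (b + b') = R x b + R x b'" for x b b'
    by (rule pairing_eqI) (simp add: Rc Pr pairing_add1 pairing_add2)
  have R3: "R (c *s x) b = c *s R x b" for c x b
    by (rule pairing_eqI) (simp add: Rc Pr pairing_sc1 pairing_sc2)
  have R4: "R x (c *s b) = c *s R x b" for c x b
    by (rule pairing_eqI) (simp add: Rc Pr pairing_sc1 pairing_sc2)
  have R5: "R x 0 = 0" "R 0 b = 0" for x b
    by (rule pairing_eqI, simp add: Rc Pr)+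
  have L1: "L (x + x') b = L x b + L x' b" for x x' b
    by (rule pairing_eqI) (simp add: Lc S pairing_add1 pairing_add2)
  have L2: "L x (b + b') = L x b + L x b'" for x b b'
    by (rule pairing_eqI) (simp add: Lc S pairing_add1 pairing_add2)
  have L3: "L (c *s x) b = c *s L x b" for c x b
    by (rule pairing_eqI) (simp add: Lc S pairing_sc1 pairing_sc2)
  have L4: "L x (c *s b) = c *s L x b" for c x b
    by (rule pairing_eqI) (simp add: Lc S pairing_sc1 pairing_sc2)
  have L5: "L x 0 = 0" "L 0 b = 0" for x b
    by (rule pairing_eqI, simp add: Lc S)+
  have RR: "R (prec x y + succ x y) c = - R x (R y c)" for x y c
    by (rule pairing_eqI) (simp add: Rc pairing_neg1 pairing_neg2 ax1)
  have LR: "L z (R x b) = - R x (L z b)" for z x b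
    by (rule pairing_eqI) (simp add: Rc Lc pairing_neg1 pairing_neg2 ax2)
  have LL: "L z (L y a) = - L (prec y z + succ y z) a" for z y a
    by (rule pairing_eqI) (simp add: Lc pairing_neg1 pairing_neg2 ax3)
  have mAas: "prec (prec x y + succ x y) z + succ (prec x y + succ x y) z
      = - (prec x (prec y z + succ y z) + succ x (prec y z + succ y z))" for x y z
    using ax1[of x y z] ax2[of x y z] ax3[of x y z]
    by (simp add: S Pr algebra_simps)
  have bT: "bilinT (semidirect succ prec)"
    unfolding bilinT_def
    by (auto simp: sd tsc_def S Pr R1 R2 R3 R4 L1 L2 L3 L4 algebra_simps vector_add_ldistrib)
  have aT: "antiassoc (semidirect succ prec)"
    unfolding antiassoc_def
  proof (intro allI)
    fix u v w :: "('k^'n) \<times> ('k^'n)"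
    obtain x a where u: "u = (x, a)" by fastforce
    obtain y b where v: "v = (y, b)" by fastforce
    obtain z c where w: "w = (z, c)" by fastforce
    show "semidirect succ prec (semidirect succ prec u v) w = - semidirect succ prec u (semidirect succ prec v w)"
      unfolding u v w using mAas[of x y z]
      by (simp add: sd RR LR LL R2 L2)
  qed
  have aA: "antiassoc (\<lambda>x y. prec x y + succ x y)"
    unfolding antiassoc_def using mAas by simp
  have cyc: "omega (semidirect succ prec u v) w + omega (semidirect succ prec v w) u
      + omega (semidirect succ prec w u) v = 0" for u v w
  proof -
    obtain x a where u: "u = (x, a)" by fastforce
    obtain y b where v: "v = (y, b)" by fastforce
    obtain z c where w: "w = (z, c)" by fastforce
    show ?thesis unfolding u v w
      by (simp add: sd Rc' Lc' pairing_add1 pairing_add2)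
  qed
  show ?thesis unfolding double_construction_def
    using bT aT aA cyc by (simp add: sd R5 L5 S Pr antiassoc_def)
qed


lemma part2:
  fixes P :: "('k::field^'n::finite) \<times> ('k^'n) \<Rightarrow> ('k^'n) \<times> ('k^'n) \<Rightarrow> ('k^'n) \<times> ('k^'n)"
    and mA mD :: "'k^'n \<Rightarrow> 'k^'n \<Rightarrow> 'k^'n"
  assumes DC: "double_construction P mA mD"
    and I: "\<forall>u a. fst (P u (0, a)) = 0 \<and> fst (P (0, a) u) = 0"
  shows "(\<forall>a b. mD a b = 0) \<and>
           antidendriform (succA P) (precA P) \<and>
           (\<forall>x y. snd (succT P (x, 0) (y, 0)) = 0 \<and> snd (precT P (x, 0) (y, 0)) = 0) \<and>
           dc_isomorphic P (semidirect (succA P) (precA P))"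
proof -
  note D = DC[unfolded double_construction_def bilinT_def antiassoc_def]
  have Pa1: "P (u + v) w = P u w + P v w" for u v w using D by metis
  have Pa2: "P u (v + w) = P u v + P u w" for u v w using D by metis
  have Ps1: "P (tsc c u) v = tsc c (P u v)" for c u v using D by metis
  have Ps2: "P u (tsc c v) = tsc c (P u v)" for c u v using D by metis
  have Pas: "P (P u v) w = - P u (P v w)" for u v w using D by metis
  have PA: "P (x, 0) (y, 0) = (mA x y, 0)" for x y using D by metis
  have PD: "P (0, a) (0, b) = (0, mD a b)" for a b using D by metis
  have cyc: "omega (P u v) w + omega (P v w) u + omega (P w u) v = 0" for u v w using D by metis
  define s where "s c x = snd (P (0, c) (x, 0))" for c x
  define t where "t x c = snd (P (x, 0) (0, c))" for x c
  have Pst: "P (0, c) (x, 0) = (0, s c x)" "P (x, 0) (0, c) = (0, t x c)" for c x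
    using I unfolding s_def t_def by (metis prod.collapse)+
  have dec: "(x, a) = (x, 0) + (0, a)" for x a :: "'k^'n" by simp
  have Pdec: "P (x, a) (y, b) = (mA x y, t x b + s a y + mD a b)" for x a y b
  proof -
    have "P (x, a) (y, b) = P ((x, 0) + (0, a)) ((y, 0) + (0, b))" by simp
    also have "\<dots> = P (x, 0) (y, 0) + P (x, 0) (0, b) + (P (0, a) (y, 0) + P (0, a) (0, b))"
      by (simp only: Pa1 Pa2 add_ac)
    finally show ?thesis by (simp add: Pst PA PD algebra_simps)
  qed
  have tsc0: "tsc c (0, a) = (0, c *s a)" "tsc c (x, 0) = (c *s x, 0)" for c a x
    by (simp_all add: tsc_def)
  have s1: "s (c + c') x = s c x + s c' x" for c c' x
    using Pa1[of "(0,c)" "(0,c')" "(x,0)"] by (simp add: s_def)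
  have s2: "s c (x + x') = s c x + s c x'" for c x x'
    using Pa2[of "(0,c)" "(x,0)" "(x',0)"] by (simp add: s_def)
  have s3: "s (k *s c) x = k *s s c x" for k c x
    using Ps1[of k "(0,c)" "(x,0)"] by (simp add: s_def tsc0 tsc_def)
  have s4: "s c (k *s x) = k *s s c x" for k c x
    using Ps2[of "(0,c)" k "(x,0)"] by (simp add: s_def tsc0 tsc_def)
  have t1: "t (x + x') c = t x c + t x' c" for c x x'
    using Pa1[of "(x,0)" "(x',0)" "(0,c)"] by (simp add: t_def)
  have t2: "t x (c + c') = t x c + t x c'" for c c' x
    using Pa2[of "(x,0)" "(0,c)" "(0,c')"] by (simp add: t_def)
  have t3: "t (k *s x) c = k *s t x c" for k c x
    using Ps1[of k "(x,0)" "(0,c)"] by (simp add: t_def tsc0 tsc_def)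
  have t4: "t x (k *s c) = k *s t x c" for k c x
    using Ps2[of "(x,0)" k "(0,c)"] by (simp add: t_def tsc0 tsc_def)
  have s0: "s 0 x = 0" "s c 0 = 0" for c x
    using s3[of 0 0 x] s4[of c 0 0] by simp_all
  have t0: "t 0 c = 0" "t x 0 = 0" for c x
    using t3[of 0 0 c] t4[of x 0 0] by simp_all
  have mD0: "mD a b = 0" for a b
  proof (rule pairing_eqI2)
    fix z
    show "pairing (mD a b) z = pairing 0 z"
      using cyc[of "(0,a)" "(0,b)" "(z,0)"] by (simp add: PD Pst)
  qed
  have cyc2: "pairing (s c x) y - pairing (mA x y) c + pairing (t y c) x = 0" for c x y
    using cyc[of "(0,c)" "(x,0)" "(y,0)"] by (simp add: PA Pst)
  have A1: "t (mA x y) c = - t x (t y c)" for x y c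
    using Pas[of "(x,0)" "(y,0)" "(0,c)"] by (simp add: PA Pst)
  have A2: "s (t z c) x = - t z (s c x)" for x z c
    using Pas[of "(z,0)" "(0,c)" "(x,0)"] by (simp add: Pst)
  have A3: "s (s c x) y = - s c (mA x y)" for x y c
    using Pas[of "(0,c)" "(x,0)" "(y,0)"] by (simp add: PA Pst)
  have succ_ex: "\<exists>z. \<forall>c. pairing c z = pairing y (s c x)" for x y
    by (rule dual_ex) (simp_all add: s1 s3 pairing_add2 pairing_sc2)
  have succ_eq: "succT P (x, 0) (y, 0) = (z, 0)" if hz: "\<forall>c. pairing c z = pairing y (s c x)" for x y z
    unfolding succT_def
  proof (rule the_equality)
    show "\<forall>w. omega (z, 0) w = omega (y, 0) (P w (x, 0))"
    proof
      fix w :: "('k^'n) \<times> ('k^'n)"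
      obtain w1 c where w: "w = (w1, c)" by fastforce
      show "omega (z, 0) w = omega (y, 0) (P w (x, 0))"
        unfolding w using hz by (simp add: Pdec t0 mD0 pairing_commute)
    qed
    show "\<And>z'. \<forall>w. omega z' w = omega (y, 0) (P w (x, 0)) \<Longrightarrow> z' = (z, 0)"
    proof -
      fix z' assume h: "\<forall>w. omega z' w = omega (y, 0) (P w (x, 0))"
      show "z' = (z, 0)"
      proof (rule omega_eqI)
        fix w :: "('k^'n) \<times> ('k^'n)"
        obtain w1 c where w: "w = (w1, c)" by fastforce
        show "omega z' w = omega (z, 0) w"
          using h hz unfolding w by (simp add: Pdec t0 mD0 pairing_commute)
      qed
    qed
  qed
  have SA: "succT P (x, 0) (y, 0) = (succA P x y, 0)" and SAc: "pairing (succA P x y) c = pairing y (s c x)"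
    for x y c
  proof -
    obtain z where hz: "\<forall>c. pairing c z = pairing y (s c x)" using succ_ex by blast
    have e: "succT P (x, 0) (y, 0) = (z, 0)" by (rule succ_eq[OF hz])
    then show "succT P (x, 0) (y, 0) = (succA P x y, 0)" by (simp add: succA_def)
    show "pairing (succA P x y) c = pairing y (s c x)"
      using e hz by (simp add: succA_def pairing_commute)
  qed
  have prec_ex: "\<exists>z. \<forall>c. pairing c z = pairing x (t y c)" for x y
    by (rule dual_ex) (simp_all add: t2 t4 pairing_add2 pairing_sc2)
  have prec_eq: "precT P (x, 0) (y, 0) = (z, 0)" if hz: "\<forall>c. pairing c z = pairing x (t y c)" for x y z
    unfolding precT_def
  proof (rule the_equality)
    show "\<forall>w. omega (z, 0) w = omega (x, 0) (P (y, 0) w)"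
    proof
      fix w :: "('k^'n) \<times> ('k^'n)"
      obtain w1 c where w: "w = (w1, c)" by fastforce
      show "omega (z, 0) w = omega (x, 0) (P (y, 0) w)"
        unfolding w using hz by (simp add: Pdec s0 mD0 pairing_commute)
    qed
    show "\<And>z'. \<forall>w. omega z' w = omega (x, 0) (P (y, 0) w) \<Longrightarrow> z' = (z, 0)"
    proof -
      fix z' assume h: "\<forall>w. omega z' w = omega (x, 0) (P (y, 0) w)"
      show "z' = (z, 0)"
      proof (rule omega_eqI)
        fix w :: "('k^'n) \<times> ('k^'n)"
        obtain w1 c where w: "w = (w1, c)" by fastforce
        show "omega z' w = omega (z, 0) w"
          using h hz unfolding w by (simp add: Pdec s0 mD0 pairing_commute)
      qed
    qed
  qed
  have PT: "precT P (x, 0) (y, 0) = (precA P x y, 0)" and PAc: "pairing (precA P x y) c = pairing x (t y c)"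
    for x y c
  proof -
    obtain z where hz: "\<forall>c. pairing c z = pairing x (t y c)" using prec_ex by blast
    have e: "precT P (x, 0) (y, 0) = (z, 0)" by (rule prec_eq[OF hz])
    then show "precT P (x, 0) (y, 0) = (precA P x y, 0)" by (simp add: precA_def)
    show "pairing (precA P x y) c = pairing x (t y c)"
      using e hz by (simp add: precA_def pairing_commute)
  qed
  have mAeq: "mA x y = precA P x y + succA P x y" for x y
  proof (rule pairing_eqI2)
    fix c
    show "pairing (mA x y) c = pairing (precA P x y + succA P x y) c"
      using cyc2[of c x y] pairing_commute[of "s c x" y] pairing_commute[of "t y c" x]
      by (simp add: pairing_add1 PAc SAc algebra_simps)
  qed
  have bS: "bilin (succA P)"
    unfolding bilin_def
    by (intro conjI allI; rule pairing_eqI2)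
       (simp_all add: SAc pairing_add1 pairing_add2 pairing_sc1 pairing_sc2 s2 s4)
  have bP: "bilin (precA P)"
    unfolding bilin_def
    by (intro conjI allI; rule pairing_eqI2)
       (simp_all add: PAc pairing_add1 pairing_add2 pairing_sc1 pairing_sc2 t1 t3)
  have AD: "antidendriform (succA P) (precA P)"
    unfolding antidendriform_def
  proof (intro conjI bS bP allI)
    fix x y z
    show "precA P (precA P x y) z = - precA P x (precA P y z + succA P y z)"
      by (rule pairing_eqI2) (simp add: PAc pairing_neg1 pairing_neg2 A1 mAeq[symmetric])
    show "precA P (succA P x y) z = - succA P x (precA P y z)"
      by (rule pairing_eqI2) (simp add: PAc SAc pairing_neg1 pairing_neg2 A2)
    show "succA P x (succA P y z) = - succA P (precA P x y + succA P x y) z"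
      by (rule pairing_eqI2) (simp add: SAc pairing_neg1 pairing_neg2 A3 mAeq[symmetric])
  qed
  have Rt: "Rstar (precA P) x b = t x b" for x b
    unfolding Rstar_def
  proof (rule the_equality)
    show "\<forall>y. pairing y (t x b) = pairing (precA P y x) b" by (simp add: PAc)
    fix c assume "\<forall>y. pairing y c = pairing (precA P y x) b"
    then show "c = t x b" by (intro pairing_eqI) (simp add: PAc)
  qed
  have Ls: "Lstar (succA P) y a = s a y" for y a
    unfolding Lstar_def
  proof (rule the_equality)
    show "\<forall>y'. pairing y' (s a y) = pairing (succA P y y') a" by (simp add: SAc)
    fix c assume "\<forall>y'. pairing y' c = pairing (succA P y y') a"
    then show "c = s a y" by (intro pairing_eqI) (simp add: SAc)
  qed
  have Peq: "P u v = semidirect (succA P) (precA P) u v" for u v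
  proof -
    obtain x a where u: "u = (x, a)" by fastforce
    obtain y b where v: "v = (y, b)" by fastforce
    show ?thesis unfolding u v
      by (simp add: Pdec semidirect_def Rt Ls mD0 mAeq)
  qed
  have iso: "dc_isomorphic P (semidirect (succA P) (precA P))"
    unfolding dc_isomorphic_def
    by (rule exI[of _ id]) (simp add: linearT_def Peq)
  show ?thesis using mD0 AD SA PT iso by simp
qed

theorem mainTheorem15:
  fixes succ prec :: "'k::field_char_0^'n::finite \<Rightarrow> 'k^'n \<Rightarrow> 'k^'n"
    and P :: "('k^'n) \<times> ('k^'n) \<Rightarrow> ('k^'n) \<times> ('k^'n) \<Rightarrow> ('k^'n) \<times> ('k^'n)"
    and mA mD :: "'k^'n \<Rightarrow> 'k^'n \<Rightarrow> 'k^'n"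
  shows "(antidendriform succ prec \<longrightarrow>
           double_construction (semidirect succ prec) (\<lambda>x y. prec x y + succ x y) (\<lambda>a b. 0))
       \<and> ((double_construction P mA mD \<and>
            (\<forall>u a. fst (P u (0, a)) = 0 \<and> fst (P (0, a) u) = 0)) \<longrightarrow>
           (\<forall>a b. mD a b = 0) \<and>
           antidendriform (succA P) (precA P) \<and>
           (\<forall>x y. snd (succT P (x, 0) (y, 0)) = 0 \<and> snd (precT P (x, 0) (y, 0)) = 0) \<and>
           dc_isomorphic P (semidirect (succA P) (precA P)))"
  using part1 part2 by blast

end
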